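(* Let $n\ge4$ and let $A$ be an $n\times n$ completely positive matrix whose graph is the $n$-cycle $1-2-\cdots-n-1$, and suppose $A=BB^T$ where $B$ is the $n\times n$ matrix whose $i$-th column, for $1\le i\le n-1$, has entry $s_i$ in row $i$, entry $t_i$ in row $i+1$ and zeros elsewhere, and whose $n$-th column has entry $t_n$ in row $1$, entry $s_n$ in row $n$ and zeros elsewhere, with all $s_i,t_i>0$. Then $A=BB^T$ is the unique CP factorization of $A$ if and only if $\prod_{i=1}^n s_i=\prod_{i=1}^n t_i$.
   Context: A symmetric $n\times n$ matrix $A$ is completely positive if $A=BB^T$ for some entrywise nonnegative $n\times k$ matrix $B$; such an equality is a CP factorization of $A$. Only CP factorizations in which the columns of $B$ are pairwise linearly independent are considered, and two CP factorizations $A=BB^T=CC^T$ are considered equal if $C=BP$ for a permutation matrix $P$. The graph of a symmetric $n\times n$ matrix $A$ has vertex set $\{1,\dots,n\}$, with $\{i,j\}$ ($i\ne j$) an edge iff $a_{ij}\ne 0$. *)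

theory Defs
  imports Complex_Main
begin

text \<open>Matrices are represented as functions nat \<Rightarrow> nat \<Rightarrow> real, with rows/columns
  indexed from 0; an n x k matrix uses the entries with row < n and column < k.
  Vertex i of the paper corresponds to index i-1 here.\<close>

definition nonneg_mat :: "nat \<Rightarrow> nat \<Rightarrow> (nat \<Rightarrow> nat \<Rightarrow> real) \<Rightarrow> bool" where
  "nonneg_mat n k C \<longleftrightarrow> (\<forall>i<n. \<forall>j<k. C i j \<ge> 0)"

definition is_gram :: "nat \<Rightarrow> nat \<Rightarrow> (nat \<Rightarrow> nat \<Rightarrow> real) \<Rightarrow> (nat \<Rightarrow> nat \<Rightarrow> real) \<Rightarrow> bool" where
  "is_gram n k A C \<longleftrightarrow> (\<forall>i<n. \<forall>j<n. A i j = (\<Sum>l<k. C i l * C j l))"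

definition completely_positive :: "nat \<Rightarrow> (nat \<Rightarrow> nat \<Rightarrow> real) \<Rightarrow> bool" where
  "completely_positive n A \<longleftrightarrow> (\<exists>k C. nonneg_mat n k C \<and> is_gram n k A C)"

definition cols_lin_indep :: "nat \<Rightarrow> (nat \<Rightarrow> nat \<Rightarrow> real) \<Rightarrow> nat \<Rightarrow> nat \<Rightarrow> bool" where
  "cols_lin_indep n C l l' \<longleftrightarrow>
     (\<forall>a b. (\<forall>i<n. a * C i l + b * C i l' = 0) \<longrightarrow> a = 0 \<and> b = 0)"

definition cp_factorization :: "nat \<Rightarrow> nat \<Rightarrow> (nat \<Rightarrow> nat \<Rightarrow> real) \<Rightarrow> (nat \<Rightarrow> nat \<Rightarrow> real) \<Rightarrow> bool" where
  "cp_factorization n k A C \<longleftrightarrow> nonneg_mat n k C \<and> is_gram n k A C \<and>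
     (\<forall>l<k. \<forall>l'<k. l \<noteq> l' \<longrightarrow> cols_lin_indep n C l l')"

definition unique_cp_factorization :: "nat \<Rightarrow> nat \<Rightarrow> (nat \<Rightarrow> nat \<Rightarrow> real) \<Rightarrow> (nat \<Rightarrow> nat \<Rightarrow> real) \<Rightarrow> bool" where
  "unique_cp_factorization n m A B \<longleftrightarrow> cp_factorization n m A B \<and>
     (\<forall>k C. cp_factorization n k A C \<longrightarrow>
        k = m \<and> (\<exists>\<sigma>. bij_betw \<sigma> {..<m} {..<m} \<and> (\<forall>i<n. \<forall>j<m. C i j = B i (\<sigma> j))))"

definition graph_edges :: "nat \<Rightarrow> (nat \<Rightarrow> nat \<Rightarrow> real) \<Rightarrow> nat set set" where
  "graph_edges n A = {{i, j} | i j. i < n \<and> j < n \<and> i \<noteq> j \<and> A i j \<noteq> 0}"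

definition cycle_edges :: "nat \<Rightarrow> nat set set" where
  "cycle_edges n = {{i, (i + 1) mod n} | i. i < n}"

definition cycB :: "nat \<Rightarrow> (nat \<Rightarrow> real) \<Rightarrow> (nat \<Rightarrow> real) \<Rightarrow> nat \<Rightarrow> nat \<Rightarrow> real" where
  "cycB n s t i j = (if i = j then s j else if i = (j + 1) mod n then t j else 0)"

end

theory Submission
  imports Defs
begin


lemma suc_mod: "i < n \<Longrightarrow> Suc i mod n = (if Suc i = n then 0 else Suc i)"
  by (cases "Suc i = n") auto

definition pr :: "nat \<Rightarrow> nat \<Rightarrow> nat" where
  "pr n i = (if i = 0 then n - 1 else i - 1)"

lemma pr_lt: "i < n \<Longrightarrow> pr n i < n" by (auto simp: pr_def)
lemma suc_pr: "i < n \<Longrightarrow> Suc (pr n i) mod n = i"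
  by (auto simp: pr_def suc_mod)
lemma pr_suc: "i < n \<Longrightarrow> pr n (Suc i mod n) = i"
  by (auto simp: pr_def suc_mod)
lemma suc_eq_iff: "i < n \<Longrightarrow> l < n \<Longrightarrow> (i = Suc l mod n) \<longleftrightarrow> (l = pr n i)"
  by (auto simp: pr_def suc_mod)

lemma cyc_prop:
  assumes "j < n" "P j" "\<forall>i<n. P i \<longrightarrow> P (Suc i mod n)"
  shows "\<forall>i<n. P i"
proof -
  have n: "n > 0" using assms by auto
  have "P ((j + m) mod n)" for m
  proof (induction m)
    case 0 then show ?case using assms by simp
  next
    case (Suc m)
    have "(j + Suc m) mod n = Suc ((j+m) mod n) mod n" by (simp add: mod_Suc_eq)
    then show ?case using Suc assms(3) n by simp
  qed
  moreover have "i < n \<Longrightarrow> i = (j + (n + i - j)) mod n" for i using assms(1) by simp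
  ultimately show ?thesis by metis
qed

lemma bij_suc: "bij_betw (\<lambda>i. Suc i mod n) {..<n} {..<n}"
proof (cases "n = 0")
  case True then show ?thesis by simp
next
  case False
  show ?thesis unfolding bij_betw_def
  proof
    show "inj_on (\<lambda>i. Suc i mod n) {..<n}" unfolding inj_on_def by (auto simp: suc_mod split: if_splits)
    show "(\<lambda>i. Suc i mod n) ` {..<n} = {..<n}"
    proof
      show "(\<lambda>i. Suc i mod n) ` {..<n} \<subseteq> {..<n}" using False by auto
      show "{..<n} \<subseteq> (\<lambda>i. Suc i mod n) ` {..<n}"
      proof
        fix i assume "i \<in> {..<n}"
        then show "i \<in> (\<lambda>i. Suc i mod n) ` {..<n}"
          using suc_pr[of i n] pr_lt[of i n] by (metis imageI lessThan_iff)
      qed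
    qed
  qed
qed

lemma prod_suc: "(\<Prod>i<n. f (Suc i mod n)) = (\<Prod>i<n. (f i :: real))"
  using prod.reindex_bij_betw[OF bij_suc] .

lemma cyc_ineq:
  fixes s t a b :: "nat \<Rightarrow> real"
  assumes n: "n \<ge> 1" and pos: "\<forall>i<n. s i > 0 \<and> t i > 0 \<and> a i > 0 \<and> b i > 0"
    and cs: "\<forall>i<n. (s i * t i)^2 \<le> a i * b i"
    and vx: "\<forall>i<n. a (Suc i mod n) + b i \<le> (s (Suc i mod n))^2 + (t i)^2"
    and pe: "(\<Prod>i<n. s i) = (\<Prod>i<n. t i)"
  shows "\<forall>i<n. a i = (s i)^2 \<and> b i = (t i)^2"
proof -
  define w where "w i = a i - (s i)^2" for i
  have sl: "Suc i mod n < n" for i using n by simp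
  have key: "w (Suc i mod n) * a i \<le> (t i)^2 * w i" if i: "i < n" for i
  proof -
    have "w (Suc i mod n) \<le> (t i)^2 - b i" using vx i unfolding w_def by force
    then have "w (Suc i mod n) * a i \<le> ((t i)^2 - b i) * a i"
      using pos i by (simp add: mult_right_mono)
    also have "\<dots> \<le> (t i)^2 * w i" using cs i unfolding w_def by (simp add: algebra_simps power_mult_distrib)
    finally show ?thesis .
  qed
  have pst: "(\<Prod>i<n. (s i)^2) = (\<Prod>i<n. (t i)^2)"
    using pe by (metis prod_power_distrib)
  have ps: "(\<Prod>i<n. s i ^2 * w (Suc i mod n)) = (\<Prod>i<n. s i^2) * (\<Prod>i<n. w i)"
    by (simp add: prod.distrib prod_suc)
  have pt: "(\<Prod>i<n. t i ^2 * w i) = (\<Prod>i<n. t i^2) * (\<Prod>i<n. w i)"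
    by (simp add: prod.distrib)
  have n0: "0 < n" using n by simp
  have notpos: "\<not> (\<exists>j<n. w j > 0)"
  proof
    assume "\<exists>j<n. w j > 0"
    then obtain j where j: "j < n" "w j > 0" by auto
    have allpos: "\<forall>i<n. w i > 0"
    proof (rule ccontr)
      assume "\<not> (\<forall>i<n. w i > 0)"
      then obtain m where m: "m < n" "w m \<le> 0" by force
      have "\<forall>i<n. w i \<le> 0"
      proof (rule cyc_prop[where P="\<lambda>i. w i \<le> 0", OF m])
        show "\<forall>i<n. w i \<le> 0 \<longrightarrow> w (Suc i mod n) \<le> 0"
        proof (intro allI impI)
          fix i assume i: "i < n" "w i \<le> 0"
          have "w (Suc i mod n) * a i \<le> 0" using key[OF i(1)] i(2)
            by (smt (verit) mult_nonneg_nonpos zero_le_power2)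
          moreover have "a i > 0" using pos i(1) by auto
          ultimately show "w (Suc i mod n) \<le> 0"
            by (simp add: mult_le_0_iff)
        qed
      qed
      then show False using j by force
    qed
    have lt: "s i ^2 * w (Suc i mod n) < t i ^2 * w i" if i: "i < n" for i
    proof -
      have "s i ^2 * w (Suc i mod n) < a i * w (Suc i mod n)"
        using allpos sl[of i] i unfolding w_def by (simp add: mult_strict_right_mono)
      then show ?thesis using key[OF i] by (simp add: mult.commute)
    qed
    have "(\<Prod>i<n. s i ^2 * w (Suc i mod n)) < (\<Prod>i<n. t i ^2 * w i)"
      apply (rule prod_mono_strict[of 0])
      subgoal using n0 by simp
      subgoal using lt[OF n0] by simp
      subgoal by simp
      subgoal for i using lt[of i] allpos sl[of i] pos by (auto intro!: less_imp_le)
      subgoal for i using allpos pos by auto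
      done
    then show False using ps pt pst by simp
  qed
  have notneg: "\<not> (\<exists>j<n. w j < 0)"
  proof
    assume "\<exists>j<n. w j < 0"
    then obtain j where j: "j < n" "w j < 0" by auto
    have allneg: "\<forall>i<n. w i < 0"
    proof (rule cyc_prop[where P="\<lambda>i. w i < 0", OF j])
      show "\<forall>i<n. w i < 0 \<longrightarrow> w (Suc i mod n) < 0"
      proof (intro allI impI)
        fix i assume i: "i < n" "w i < 0"
        have "w (Suc i mod n) * a i < 0" using key[OF i(1)] i(2) pos i(1)
          by (smt (verit) mult_pos_neg zero_less_power)
        moreover have "a i > 0" using pos i(1) by auto
        ultimately show "w (Suc i mod n) < 0"
          by (simp add: mult_less_0_iff)
      qed
    qed
    have lt: "t i ^2 * (- w i) < s i ^2 * (- w (Suc i mod n))" if i: "i < n" for i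
    proof -
      have "a i * (- w (Suc i mod n)) < s i ^2 * (- w (Suc i mod n))"
        using allneg sl[of i] i unfolding w_def by (simp add: mult_strict_right_mono)
      then show ?thesis using key[OF i] by (simp add: mult.commute)
    qed
    have "(\<Prod>i<n. t i ^2 * (- w i)) < (\<Prod>i<n. s i ^2 * (- w (Suc i mod n)))"
      apply (rule prod_mono_strict[of 0])
      subgoal using n0 by simp
      subgoal using lt[OF n0] by simp
      subgoal by simp
      subgoal for i using lt[of i] allneg sl[of i] pos by (auto intro!: less_imp_le mult_pos_neg)
      subgoal for i using allneg sl[of i] pos by (auto intro!: mult_pos_neg)
      done
    moreover have "(\<Prod>i<n. s i ^2 * (- w (Suc i mod n))) = (\<Prod>i<n. s i^2) * (\<Prod>i<n. - w i)"
      by (simp only: prod.distrib prod_suc[of "\<lambda>i. - w i"])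
    moreover have "(\<Prod>i<n. t i ^2 * (- w i)) = (\<Prod>i<n. t i^2) * (\<Prod>i<n. - w i)"
      by (simp only: prod.distrib)
    ultimately show False using pst by simp
  qed
  have w0: "\<forall>i<n. w i = 0" using notpos notneg by force
  show ?thesis
  proof (intro allI impI conjI)
    fix i assume i: "i < n"
    show ai: "a i = (s i)^2" using w0 i unfolding w_def by auto
    have "a (Suc i mod n) = (s (Suc i mod n))^2" using w0 sl[of i] unfolding w_def by auto
    then have b1: "b i \<le> t i ^2" using vx i by auto
    have c1: "(s i)^2 * (t i)^2 \<le> (s i)^2 * b i" using cs i ai by (metis power_mult_distrib)
    have c2: "(s i)^2 > 0" using pos i by force
    have "t i ^2 \<le> b i" using c1 c2 mult_le_cancel_left_pos by blast
    with b1 show "b i = (t i)^2" by simp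
  qed
qed



lemma pr_inj: "i < n \<Longrightarrow> j < n \<Longrightarrow> pr n i = pr n j \<longleftrightarrow> i = j"
  by (auto simp: pr_def)

lemma cycB_row: assumes "2 \<le> n" "i < n" "l < n"
  shows "cycB n \<sigma> \<tau> i l = (if l = i then \<sigma> i else if l = pr n i then \<tau> (pr n i) else 0)"
  using assms suc_eq_iff[of i n l] by (auto simp: cycB_def)

lemma gram_cyc:
  assumes n: "3 \<le> n" and i: "i < n" and j: "j < n"
  shows "(\<Sum>l<n. cycB n \<sigma> \<tau> i l * cycB n \<sigma> \<tau> j l) =
     (if i = j then (\<sigma> i)^2 + (\<tau> (pr n i))^2 else if j = Suc i mod n then \<sigma> i * \<tau> i
      else if i = Suc j mod n then \<sigma> j * \<tau> j else 0)"
proof -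
  let ?f = "\<lambda>l. cycB n \<sigma> \<tau> i l * cycB n \<sigma> \<tau> j l"
  have ne: "i \<noteq> pr n i" using n i by (auto simp: pr_def)
  have pri: "pr n i < n" using pr_lt i .
  have "(\<Sum>l<n. ?f l) = (\<Sum>l\<in>{i, pr n i}. ?f l)"
    apply (rule sum.mono_neutral_right)
    subgoal by simp
    subgoal using i pri by auto
    subgoal proof
      fix x assume "x \<in> {..<n} - {i, pr n i}"
      then show "?f x = 0" using cycB_row[of n i x] n i by auto
    qed
    done
  also have "\<dots> = ?f i + ?f (pr n i)" using ne by simp
  also have "\<dots> = (if i = j then (\<sigma> i)^2 + (\<tau> (pr n i))^2 else if j = Suc i mod n then \<sigma> i * \<tau> i
      else if i = Suc j mod n then \<sigma> j * \<tau> j else 0)"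
  proof -
    have e1: "(i = pr n j) \<longleftrightarrow> j = Suc i mod n" using suc_eq_iff[of j n i] i j by auto
    have e2: "(pr n i = j) \<longleftrightarrow> i = Suc j mod n" using suc_eq_iff[of i n j] i j by auto
    have e3: "\<not> (j = Suc i mod n \<and> i = Suc j mod n)" using n i j by (auto simp: suc_mod)
    have r1: "cycB n \<sigma> \<tau> i i = \<sigma> i" using cycB_row[of n i i] n i by simp
    have r2: "cycB n \<sigma> \<tau> i (pr n i) = \<tau> (pr n i)" using cycB_row[of n i "pr n i"] n i pri ne by simp
    have r3: "cycB n \<sigma> \<tau> j i = (if i = j then \<sigma> j else if i = pr n j then \<tau> (pr n j) else 0)"
      using cycB_row[of n j i] n i j by simp
    have r4: "cycB n \<sigma> \<tau> j (pr n i) = (if pr n i = j then \<sigma> j else if pr n i = pr n j then \<tau> (pr n j) else 0)"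
      using cycB_row[of n j "pr n i"] n pri j by simp
    have pij: "pr n i = pr n j \<longleftrightarrow> i = j" using pr_inj[OF i j] .
    show ?thesis
    proof (cases "i = j")
      case True then show ?thesis using r1 r2 r3 r4 ne by (simp add: power2_eq_square)
    next
      case F1: False
      show ?thesis
      proof (cases "j = Suc i mod n")
        case True
        then have "i = pr n j" "pr n i \<noteq> j" using e1 e2 e3 by auto
        then show ?thesis using r1 r2 r3 r4 F1 True pij by simp
      next
        case F2: False
        then have "i \<noteq> pr n j" using e1 by auto
        then show ?thesis using r1 r2 r3 r4 F1 F2 pij e2 by auto
      qed
    qed
  qed
  finally show ?thesis .
qed

lemma cols_sym: "cols_lin_indep n C l l' \<longleftrightarrow> cols_lin_indep n C l' l"
  unfolding cols_lin_indep_def by (metis add.commute)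

lemma cycB_indep:
  assumes n: "3 \<le> n" and pos: "\<forall>i<n. \<sigma> i > 0 \<and> \<tau> i > 0"
    and l: "l < n" and l': "l' < n" and ne: "l \<noteq> l'"
  shows "cols_lin_indep n (cycB n \<sigma> \<tau>) l l'"
  unfolding cols_lin_indep_def
proof (intro allI impI)
  fix a b assume h: "\<forall>i<n. a * cycB n \<sigma> \<tau> i l + b * cycB n \<sigma> \<tau> i l' = 0"
  have a0: "a = 0"
  proof (cases "l = Suc l' mod n")
    case True
    have x: "Suc l mod n \<noteq> l'" "Suc l mod n \<noteq> Suc l' mod n" "Suc l mod n < n" "Suc l mod n \<noteq> l"
      using True n l l' ne by (auto simp: suc_mod split: if_splits)
    have y1: "cycB n \<sigma> \<tau> (Suc l mod n) l = \<tau> l" using x unfolding cycB_def by simp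
    have y2: "cycB n \<sigma> \<tau> (Suc l mod n) l' = 0" using x unfolding cycB_def by simp
    have "a * \<tau> l = 0" using h[rule_format, OF x(3)] y1 y2 by simp
    then show ?thesis using pos l by auto
  next
    case False
    then have "a * \<sigma> l = 0" using h[rule_format, of l] n l ne by (auto simp: cycB_def)
    then show ?thesis using pos l by auto
  qed
  then have "b * \<sigma> l' = 0" using h[rule_format, of l'] l' ne by (auto simp: cycB_def)
  then show "a = 0 \<and> b = 0" using a0 pos l' by auto
qed



lemma nonuniq_X:
  fixes s t X :: "nat \<Rightarrow> real" and A :: "nat \<Rightarrow> nat \<Rightarrow> real"
  assumes n: "3 \<le> n" and pos: "\<forall>i<n. s i > 0 \<and> t i > 0 \<and> X i > 0"
    and hA: "is_gram n n A (cycB n s t)"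
    and vx: "\<forall>i. 0 < i \<longrightarrow> i < n \<longrightarrow> s i ^ 2 * X i + t (i - 1) ^ 2 / X (i - 1) = s i ^ 2 + t (i - 1) ^ 2"
    and v0: "s 0 ^ 2 * X 0 + t (n - 1) ^ 2 / X (n - 1) < s 0 ^ 2 + t (n - 1) ^ 2"
  shows "\<exists>C. cp_factorization n (Suc n) A C"
proof -
  define \<sigma> where "\<sigma> j = s j * sqrt (X j)" for j
  define \<tau> where "\<tau> j = t j / sqrt (X j)" for j
  define d where "d = s 0 ^ 2 + t (n - 1) ^ 2 - (s 0 ^ 2 * X 0 + t (n - 1) ^ 2 / X (n - 1))"
  define \<delta> where "\<delta> = sqrt d"
  define C where "C i l = (if l < n then cycB n \<sigma> \<tau> i l else if i = 0 then \<delta> else 0)" for i l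
  have dpos: "d > 0" using v0 unfolding d_def by simp
  have \<delta>pos: "\<delta> > 0" using dpos unfolding \<delta>_def by simp
  have \<delta>sq: "\<delta>^2 = d" using dpos unfolding \<delta>_def by simp
  have stpos: "\<forall>i<n. \<sigma> i > 0 \<and> \<tau> i > 0" using pos unfolding \<sigma>_def \<tau>_def by auto
  have \<sigma>sq: "\<sigma> i ^ 2 = s i ^ 2 * X i" if "i < n" for i
    using pos that unfolding \<sigma>_def by (force simp add: power_mult_distrib)
  have \<tau>sq: "\<tau> i ^ 2 = t i ^ 2 / X i" if "i < n" for i
    using pos that unfolding \<tau>_def by (force simp add: power_divide)
  have \<sigma>\<tau>: "\<sigma> i * \<tau> i = s i * t i" if "i < n" for i
  proof -
    have "sqrt (X i) > 0" using pos that by auto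
    then show ?thesis unfolding \<sigma>_def \<tau>_def by simp
  qed
  have nn: "nonneg_mat n (Suc n) C"
    unfolding nonneg_mat_def
  proof (intro allI impI)
    fix i j assume "i < n" "j < Suc n"
    show "0 \<le> C i j"
    proof (cases "j < n")
      case True
      then show ?thesis using stpos unfolding C_def cycB_def by (simp add: less_imp_le)
    next
      case False
      then show ?thesis using \<delta>pos unfolding C_def by simp
    qed
  qed
  have gr: "is_gram n (Suc n) A C"
    unfolding is_gram_def
  proof (intro allI impI)
    fix i j assume i: "i < n" and j: "j < n"
    have "(\<Sum>l<Suc n. C i l * C j l) = (\<Sum>l<n. cycB n \<sigma> \<tau> i l * cycB n \<sigma> \<tau> j l)
        + (if i = 0 \<and> j = 0 then \<delta>^2 else 0)"
      by (simp add: C_def power2_eq_square)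
    also have "\<dots> = (if i = j then (\<sigma> i)^2 + (\<tau> (pr n i))^2 else if j = Suc i mod n then \<sigma> i * \<tau> i
      else if i = Suc j mod n then \<sigma> j * \<tau> j else 0) + (if i = 0 \<and> j = 0 then \<delta>^2 else 0)"
      using gram_cyc[OF n i j] by simp
    also have "\<dots> = (if i = j then (s i)^2 + (t (pr n i))^2 else if j = Suc i mod n then s i * t i
      else if i = Suc j mod n then s j * t j else 0)"
    proof (cases "i = j")
      case True
      have pri: "pr n i < n" using pr_lt i .
      show ?thesis
      proof (cases "i = 0")
        case True
        then have "pr n i = n - 1" by (simp add: pr_def)
        then have e: "\<sigma> i^2 + \<tau> (pr n i)^2 + \<delta>^2 = s i^2 + t (pr n i)^2"
          using True \<sigma>sq[OF i] \<tau>sq[OF pri] \<delta>sq unfolding d_def by simp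
        show ?thesis using e True \<open>i = j\<close> by simp
      next
        case False
        then have "pr n i = i - 1" by (simp add: pr_def)
        then have e: "\<sigma> i^2 + \<tau> (pr n i)^2 = s i^2 + t (pr n i)^2"
          using False \<sigma>sq[OF i] \<tau>sq[OF pri] vx i by simp
        show ?thesis using e False \<open>i = j\<close> by simp
      qed
    next
      case False
      have z: "(if i = 0 \<and> j = 0 then \<delta>^2 else (0::real)) = 0" using False by auto
      show ?thesis unfolding z using \<sigma>\<tau>[OF i] \<sigma>\<tau>[OF j] False by simp
    qed
    also have "\<dots> = A i j" using hA i j gram_cyc[OF n i j, of s t] unfolding is_gram_def by simp
    finally show "A i j = (\<Sum>l<Suc n. C i l * C j l)" by simp
  qed
  have ind_lt: "cols_lin_indep n C l l'" if l: "l < n" "l' < n" "l \<noteq> l'" for l l'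
  proof -
    have c: "cols_lin_indep n (cycB n \<sigma> \<tau>) l l'" using cycB_indep[OF n stpos l] .
    have eq: "\<And>i. C i l = cycB n \<sigma> \<tau> i l" "\<And>i. C i l' = cycB n \<sigma> \<tau> i l'"
      using l by (simp_all add: C_def)
    show ?thesis using c unfolding cols_lin_indep_def eq .
  qed
  have ind_n: "cols_lin_indep n C l n" if l: "l < n" for l
    unfolding cols_lin_indep_def
  proof (intro allI impI)
    fix a b assume h: "\<forall>i<n. a * C i l + b * C i n = 0"
    have a0: "a = 0"
    proof (cases "l = 0")
      case True
      have r: "Suc 0 mod n = Suc 0" "Suc 0 < n" using n by auto
      have "C (Suc 0) l = \<tau> 0" "C (Suc 0) n = 0" using True r l unfolding C_def cycB_def by auto
      then have "a * \<tau> 0 = 0" using h r by force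
      then show ?thesis using stpos n by force
    next
      case False
      have "C l l = \<sigma> l" "C l n = 0" using False l unfolding C_def cycB_def by auto
      then have "a * \<sigma> l = 0" using h l by force
      then show ?thesis using stpos l by force
    qed
    have "C 0 n = \<delta>" unfolding C_def by simp
    then have "b * \<delta> = 0" using h a0 n by force
    then show "a = 0 \<and> b = 0" using a0 \<delta>pos by simp
  qed
  have ind: "\<forall>l<Suc n. \<forall>l'<Suc n. l \<noteq> l' \<longrightarrow> cols_lin_indep n C l l'"
  proof (intro allI impI)
    fix l l' assume "l < Suc n" "l' < Suc n" "l \<noteq> l'"
    then consider "l < n" "l' < n" | "l < n" "l' = n" | "l = n" "l' < n" by linarith
    then show "cols_lin_indep n C l l'"
      by cases (use ind_lt ind_n cols_sym \<open>l \<noteq> l'\<close> in auto)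
  qed
  show ?thesis using nn gr ind unfolding cp_factorization_def by blast
qed



primrec aff :: "(nat \<Rightarrow> real) \<Rightarrow> (nat \<Rightarrow> real) \<Rightarrow> real \<Rightarrow> nat \<Rightarrow> real" where
  "aff \<alpha> \<beta> V 0 = V"
| "aff \<alpha> \<beta> V (Suc i) = \<alpha> i * aff \<alpha> \<beta> V i + \<beta> i"

lemma aff_lin: "aff \<alpha> \<beta> V i = aff \<alpha> \<beta> 0 i + V * (\<Prod>j<i. \<alpha> j)"
  by (induction i) (simp_all add: algebra_simps)

lemma aff_pos: "V > 0 \<Longrightarrow> (\<forall>j. \<alpha> j > 0 \<and> \<beta> j \<ge> 0) \<Longrightarrow> aff \<alpha> \<beta> V i > 0"
  by (induction i) (auto intro!: add_pos_nonneg)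

lemma aff_nonneg: "(\<forall>j. \<alpha> j > 0 \<and> \<beta> j \<ge> 0) \<Longrightarrow> aff \<alpha> \<beta> 0 i \<ge> 0"
proof (induction i)
  case (Suc i)
  have "\<alpha> i \<ge> 0" "\<beta> i \<ge> 0" using Suc.prems by (auto simp: less_imp_le)
  then show ?case using Suc by simp
qed simp

lemma algA: fixes a b v :: real assumes "a > 0" "b > 0" "v > 0"
  shows "a * (1 + 1 / (a * (v + 1) / b)) + b / (1 + 1 / v) = a + b"
proof -
  have 0: "a * (v + 1) > 0" "v + 1 > 0" using assms by auto
  have 1: "a * (1 + 1 / (a * (v + 1) / b)) = a + b / (v + 1)" using assms 0 by (simp add: field_simps)
  have 2: "b / (1 + 1 / v) = b * v / (v + 1)" using assms by (simp add: field_simps)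
  have 3: "b / (v + 1) + b * v / (v + 1) = b"
  proof -
    have "b / (v + 1) + b * v / (v + 1) = (b * (v + 1)) / (v + 1)" by (simp add: add_divide_distrib algebra_simps)
    also have "\<dots> = b" using assms by simp
    finally show ?thesis .
  qed
  show ?thesis using 1 2 3 by simp
qed

lemma algB: fixes a b q :: real assumes "a > 0" "b > 0" "q > 1"
  shows "a * (1 - 1 / (a * (q - 1) / b)) + b / (1 - 1 / q) = a + b"
proof -
  have 1: "a * (1 - 1 / (a * (q - 1) / b)) = a - b / (q - 1)" using assms by (simp add: field_simps)
  have 2: "b / (1 - 1 / q) = b * q / (q - 1)" using assms by (simp add: field_simps)
  have 3: "b * q / (q - 1) - b / (q - 1) = b"
  proof -
    have "b * q / (q - 1) - b / (q - 1) = (b * q - b) / (q - 1)" by (simp add: diff_divide_distrib)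
    also have "\<dots> = b * (q - 1) / (q - 1)" by (simp add: algebra_simps)
    also have "\<dots> = b" using assms by simp
    finally show ?thesis .
  qed
  show ?thesis using 1 2 3 by simp
qed



lemma algA2: fixes a b w V :: real assumes "a > 0" "b > 0" "w > 0" "V > a * (w + 1) / b"
  shows "a * (1 + 1 / V) + b / (1 + 1 / w) < a + b"
proof -
  have Vp: "V > 0" using assms by (smt (verit) divide_pos_pos mult_pos_pos)
  have "a * (w + 1) < V * b" using assms by (simp add: pos_divide_less_eq)
  then have l: "a / V < b / (w + 1)" using Vp assms by (simp add: divide_simps mult.commute)
  have 1: "a * (1 + 1 / V) = a + a / V" by (simp add: algebra_simps)
  have 2: "b / (1 + 1 / w) = b - b / (w + 1)"
  proof -
    have "b / (1 + 1 / w) = b * w / (w + 1)" using assms by (simp add: field_simps)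
    also have "\<dots> = (b * (w + 1) - b) / (w + 1)" by (simp add: algebra_simps)
    also have "\<dots> = b - b / (w + 1)" using assms by (simp add: diff_divide_distrib)
    finally show ?thesis .
  qed
  show ?thesis using 1 2 l by simp
qed

lemma algB2: fixes a b w Q :: real assumes "a > 0" "b > 0" "w > 1" "Q > 0" "Q < a * (w - 1) / b"
  shows "a * (1 - 1 / Q) + b / (1 - 1 / w) < a + b"
proof -
  have "Q * b < a * (w - 1)" using assms by (simp add: less_divide_eq)
  then have l: "b / (w - 1) < a / Q" using assms by (simp add: divide_simps mult.commute)
  have 1: "a * (1 - 1 / Q) = a - a / Q" by (simp add: algebra_simps)
  have 2: "b / (1 - 1 / w) = b + b / (w - 1)"
  proof -
    have "b / (1 - 1 / w) = b * w / (w - 1)" using assms by (simp add: field_simps)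
    also have "\<dots> = (b * (w - 1) + b) / (w - 1)" by (simp add: algebra_simps)
    also have "\<dots> = b + b / (w - 1)" using assms by (simp add: add_divide_distrib)
    finally show ?thesis .
  qed
  show ?thesis using 1 2 l by simp
qed

lemma prodR:
  fixes s t :: "nat \<Rightarrow> real"
  assumes pos: "\<forall>i<n. s i > 0 \<and> t i > 0"
  shows "(\<Prod>j<n. (if j < n then s (Suc j mod n) ^ 2 / t j ^ 2 else 1)) = (\<Prod>i<n. s i) ^ 2 / (\<Prod>i<n. t i) ^ 2"
proof -
  have "(\<Prod>j<n. (if j < n then s (Suc j mod n) ^ 2 / t j ^ 2 else 1)) = (\<Prod>j<n. s (Suc j mod n) ^ 2 / t j ^ 2)"
    by (rule prod.cong) auto
  also have "\<dots> = (\<Prod>j<n. s (Suc j mod n) ^ 2) / (\<Prod>j<n. t j ^ 2)" by (simp add: prod_dividef)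
  also have "\<dots> = (\<Prod>j<n. s j ^ 2) / (\<Prod>j<n. t j ^ 2)" using prod_suc[of "\<lambda>j. s j ^ 2" n] by simp
  also have "\<dots> = (\<Prod>i<n. s i) ^ 2 / (\<Prod>i<n. t i) ^ 2" by (simp add: prod_power_distrib)
  finally show ?thesis .
qed

definition good_X :: "nat \<Rightarrow> (nat \<Rightarrow> real) \<Rightarrow> (nat \<Rightarrow> real) \<Rightarrow> (nat \<Rightarrow> real) \<Rightarrow> bool" where
  "good_X n s t X \<longleftrightarrow> (\<forall>i<n. X i > 0) \<and>
     (\<forall>i. 0 < i \<longrightarrow> i < n \<longrightarrow> s i ^ 2 * X i + t (i - 1) ^ 2 / X (i - 1) = s i ^ 2 + t (i - 1) ^ 2) \<and>
     s 0 ^ 2 * X 0 + t (n - 1) ^ 2 / X (n - 1) < s 0 ^ 2 + t (n - 1) ^ 2"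

lemma case_lt:
  fixes s t :: "nat \<Rightarrow> real"
  assumes n: "2 \<le> n" and pos: "\<forall>i<n. s i > 0 \<and> t i > 0"
    and lt: "(\<Prod>i<n. s i) < (\<Prod>i<n. t i)"
  shows "\<exists>X. good_X n s t X"
proof -
  define \<rho> where "\<rho> j = (if j < n then s (Suc j mod n) ^ 2 / t j ^ 2 else 1)" for j
  have \<rho>pos: "\<forall>j. \<rho> j > 0 \<and> \<rho> j \<ge> 0"
  proof
    fix j
    show "\<rho> j > 0 \<and> \<rho> j \<ge> 0"
    proof (cases "j < n")
      case True
      then have "Suc j mod n < n" by simp
      then have "s (Suc j mod n) > 0" "t j > 0" using pos True by auto
      then show ?thesis unfolding \<rho>_def using True by simp
    qed (simp add: \<rho>_def)
  qed
  define m where "m = n - 1"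
  have nm: "n = Suc m" using n unfolding m_def by simp
  define c where "c = aff \<rho> \<rho> 0 m"
  define P where "P = (\<Prod>j<m. \<rho> j)"
  define R where "R = (\<Prod>j<n. \<rho> j)"
  have RP: "R = P * \<rho> m" unfolding R_def P_def nm by simp
  have c0: "c \<ge> 0" unfolding c_def using aff_nonneg \<rho>pos by blast
  have sp: "(\<Prod>i<n. s i) > 0" "(\<Prod>i<n. t i) > 0" using pos by (auto intro!: prod_pos)
  have "(\<Prod>i<n. s i) ^ 2 < (\<Prod>i<n. t i) ^ 2" using sp lt by (simp add: power_strict_mono)
  moreover have "(\<Prod>i<n. t i) ^ 2 > 0" using sp(2) by (rule zero_less_power)
  ultimately have "(\<Prod>i<n. s i) ^ 2 / (\<Prod>i<n. t i) ^ 2 < 1" by simp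
  then have R1: "R < 1" unfolding R_def \<rho>_def using prodR[OF pos] by simp
  define V where "V = \<rho> m * (c + 1) / (1 - R) + 1"
  have Vpos: "V > 0" unfolding V_def using R1 c0 \<rho>pos by (auto intro!: add_nonneg_pos divide_nonneg_pos less_imp_le)
  define v where "v = aff \<rho> \<rho> V"
  have vpos: "v i > 0" for i unfolding v_def using aff_pos[OF Vpos] \<rho>pos by blast
  define X where "X i = 1 + 1 / v i" for i
  have Xpos: "\<forall>i<n. X i > 0" unfolding X_def using vpos by (auto intro!: add_pos_pos)
  have vx: "\<forall>i. 0 < i \<longrightarrow> i < n \<longrightarrow> s i ^ 2 * X i + t (i - 1) ^ 2 / X (i - 1) = s i ^ 2 + t (i - 1) ^ 2"
  proof (intro allI impI)
    fix i assume i: "0 < i" "i < n"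
    define j where "j = i - 1"
    have ij: "i = Suc j" "j < n" "Suc j mod n = i" using i unfolding j_def by auto
    have a: "s i ^ 2 > 0" "t j ^ 2 > 0" using pos ij i by (auto dest: Suc_lessD)
    have rj: "\<rho> j = s i ^ 2 / t j ^ 2" unfolding \<rho>_def using ij by simp
    have "v i = \<rho> j * v j + \<rho> j" unfolding v_def using ij(1) by simp
    then have vi: "v i = s i ^ 2 * (v j + 1) / t j ^ 2"
      using a(2) by (simp add: rj field_simps)
    show "s i ^ 2 * X i + t (i - 1) ^ 2 / X (i - 1) = s i ^ 2 + t (i - 1) ^ 2"
      unfolding X_def vi j_def[symmetric] using algA[OF a vpos[of j]] by simp
  qed
  have v0: "s 0 ^ 2 * X 0 + t (n - 1) ^ 2 / X (n - 1) < s 0 ^ 2 + t (n - 1) ^ 2"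
  proof -
    have a: "s 0 ^ 2 > 0" "t m ^ 2 > 0" using pos nm by auto
    have \<rho>m: "\<rho> m = s 0 ^ 2 / t m ^ 2" unfolding \<rho>_def using nm by simp
    have vm: "v m = c + V * P" unfolding v_def c_def P_def using aff_lin by blast
    have "\<rho> m * (v m + 1) = \<rho> m * (c + 1) + V * R" unfolding vm RP by (simp add: algebra_simps)
    also have "\<dots> < V"
    proof -
      have "V * (1 - R) = \<rho> m * (c + 1) + (1 - R)" unfolding V_def using R1 by (simp add: field_simps)
      then show ?thesis using R1 by (simp add: algebra_simps)
    qed
    finally have "V > s 0 ^ 2 * (v m + 1) / t m ^ 2" unfolding \<rho>m by simp
    then have "s 0 ^ 2 * (1 + 1 / V) + t m ^ 2 / (1 + 1 / v m) < s 0 ^ 2 + t m ^ 2"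
      using algA2[OF a vpos[of m]] by simp
    then show ?thesis unfolding X_def v_def[symmetric] m_def by (simp add: v_def)
  qed
  show ?thesis unfolding good_X_def using Xpos vx v0 by blast
qed



lemma case_gt:
  fixes s t :: "nat \<Rightarrow> real"
  assumes n: "2 \<le> n" and pos: "\<forall>i<n. s i > 0 \<and> t i > 0"
    and gt: "(\<Prod>i<n. t i) < (\<Prod>i<n. s i)"
  shows "\<exists>X. good_X n s t X"
proof -
  define \<rho> where "\<rho> j = (if j < n then s (Suc j mod n) ^ 2 / t j ^ 2 else 1)" for j
  have \<rho>pos: "\<forall>j. \<rho> j > 0"
  proof
    fix j
    show "\<rho> j > 0"
    proof (cases "j < n")
      case True
      then have "Suc j mod n < n" by simp
      then have "s (Suc j mod n) > 0" "t j > 0" using pos True by auto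
      then show ?thesis unfolding \<rho>_def using True by simp
    qed (simp add: \<rho>_def)
  qed
  define m where "m = n - 1"
  have nm: "n = Suc m" using n unfolding m_def by simp
  define c where "c = aff \<rho> (\<lambda>j. - \<rho> j) 0 m"
  define P where "P = (\<Prod>j<m. \<rho> j)"
  define R where "R = (\<Prod>j<n. \<rho> j)"
  have RP: "R = P * \<rho> m" unfolding R_def P_def nm by simp
  have sp: "(\<Prod>i<n. s i) > 0" "(\<Prod>i<n. t i) > 0" using pos by (auto intro!: prod_pos)
  have "(\<Prod>i<n. t i) ^ 2 < (\<Prod>i<n. s i) ^ 2" using sp gt by (simp add: power_strict_mono)
  moreover have "(\<Prod>i<n. t i) ^ 2 > 0" using sp(2) by (rule zero_less_power)
  ultimately have "(\<Prod>i<n. s i) ^ 2 / (\<Prod>i<n. t i) ^ 2 > 1" by simp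
  then have R1: "R > 1" unfolding R_def \<rho>_def using prodR[OF pos] by simp
  define Q where "Q = \<bar>\<rho> m * (c - 1)\<bar> / (R - 1) + 1"
  have Qpos: "Q > 0" unfolding Q_def using R1 by (auto intro!: add_nonneg_pos divide_nonneg_pos)
  define q where "q = aff \<rho> (\<lambda>j. - \<rho> j) Q"
  have qsuc: "q (Suc j) = \<rho> j * (q j - 1)" for j unfolding q_def by (simp add: algebra_simps)
  have qm: "\<rho> m * (q m - 1) > Q"
  proof -
    have vm: "q m = c + Q * P" unfolding q_def c_def P_def using aff_lin by blast
    have "\<rho> m * (q m - 1) = \<rho> m * (c - 1) + Q * R" unfolding vm RP by (simp add: algebra_simps)
    moreover have "Q * (R - 1) = \<bar>\<rho> m * (c - 1)\<bar> + (R - 1)" unfolding Q_def using R1 by (simp add: field_simps)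
    ultimately show ?thesis using R1 by (simp add: algebra_simps)
  qed
  have qm1: "q m > 1"
  proof -
    have "\<rho> m * (q m - 1) > 0" using qm Qpos by simp
    moreover have "\<rho> m > 0" using \<rho>pos by blast
    ultimately have "q m - 1 > 0" by (simp add: zero_less_mult_iff)
    then show ?thesis by simp
  qed
  have down: "q (m - k) > 1" if "k \<le> m" for k
    using that
  proof (induction k)
    case 0 then show ?case using qm1 by simp
  next
    case (Suc k)
    define j where "j = m - Suc k"
    have sj: "Suc j = m - k" unfolding j_def using Suc.prems by simp
    have "q (Suc j) > 1" using Suc sj by simp
    then have "\<rho> j * (q j - 1) > 0" unfolding qsuc by simp
    moreover have "\<rho> j > 0" using \<rho>pos by blast
    ultimately have "q j - 1 > 0" by (simp add: zero_less_mult_iff)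
    then show ?case unfolding j_def[symmetric] by simp
  qed
  have qgt: "q i > 1" if "i < n" for i
  proof -
    have "i = m - (m - i)" using that nm by simp
    then show ?thesis using down[of "m - i"] by simp
  qed
  define X where "X i = 1 - 1 / q i" for i
  have Xpos: "\<forall>i<n. X i > 0" unfolding X_def using qgt by (auto simp: divide_less_eq)
  have vx: "\<forall>i. 0 < i \<longrightarrow> i < n \<longrightarrow> s i ^ 2 * X i + t (i - 1) ^ 2 / X (i - 1) = s i ^ 2 + t (i - 1) ^ 2"
  proof (intro allI impI)
    fix i assume i: "0 < i" "i < n"
    define j where "j = i - 1"
    have ij: "i = Suc j" "j < n" "Suc j mod n = i" using i unfolding j_def by auto
    have a: "s i ^ 2 > 0" "t j ^ 2 > 0" using pos ij i by (auto dest: Suc_lessD)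
    have rj: "\<rho> j = s i ^ 2 / t j ^ 2" unfolding \<rho>_def using ij by simp
    have vi: "q i = s i ^ 2 * (q j - 1) / t j ^ 2"
      using qsuc[of j] ij(1) a(2) by (simp add: rj field_simps)
    show "s i ^ 2 * X i + t (i - 1) ^ 2 / X (i - 1) = s i ^ 2 + t (i - 1) ^ 2"
      unfolding X_def vi j_def[symmetric] using algB[OF a qgt[OF ij(2)]] by simp
  qed
  have v0: "s 0 ^ 2 * X 0 + t (n - 1) ^ 2 / X (n - 1) < s 0 ^ 2 + t (n - 1) ^ 2"
  proof -
    have a: "s 0 ^ 2 > 0" "t m ^ 2 > 0" using pos nm by auto
    have \<rho>m: "\<rho> m = s 0 ^ 2 / t m ^ 2" unfolding \<rho>_def using nm by simp
    have "Q < s 0 ^ 2 * (q m - 1) / t m ^ 2" using qm unfolding \<rho>m by simp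
    then have "s 0 ^ 2 * (1 - 1 / Q) + t m ^ 2 / (1 - 1 / q m) < s 0 ^ 2 + t m ^ 2"
      using algB2[OF a qm1 Qpos] by simp
    moreover have "q 0 = Q" unfolding q_def by simp
    ultimately show ?thesis unfolding X_def m_def by simp
  qed
  show ?thesis unfolding good_X_def using Xpos vx v0 by blast
qed



lemma cs_sum:
  fixes f g :: "nat \<Rightarrow> real"
  assumes fin: "finite S"
  shows "(\<Sum>l\<in>S. f l * g l)^2 \<le> (\<Sum>l\<in>S. f l ^ 2) * (\<Sum>l\<in>S. g l ^ 2)"
proof -
  define a where "a = (\<Sum>l\<in>S. f l ^ 2)"
  define b where "b = (\<Sum>l\<in>S. g l ^ 2)"
  define p where "p = (\<Sum>l\<in>S. f l * g l)"
  have b0: "b \<ge> 0" unfolding b_def by (simp add: sum_nonneg)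
  show ?thesis
  proof (cases "b = 0")
    case True
    then have "\<forall>l\<in>S. g l ^ 2 = 0" unfolding b_def using fin sum_nonneg_eq_0_iff[of S "\<lambda>l. g l ^ 2"] by simp
    then have "p = 0" unfolding p_def by simp
    then show ?thesis using True unfolding a_def b_def p_def[symmetric] by simp
  next
    case False
    then have bp: "b > 0" using b0 by simp
    have "0 \<le> (\<Sum>l\<in>S. (b * f l - p * g l) ^ 2)" by (simp add: sum_nonneg)
    also have "\<dots> = (\<Sum>l\<in>S. b^2 * f l^2 - (2*b*p) * (f l * g l) + p^2 * g l^2)"
      by (rule sum.cong) (simp_all add: power2_eq_square algebra_simps)
    also have "\<dots> = b^2 * (\<Sum>l\<in>S. f l^2) - (2*b*p) * (\<Sum>l\<in>S. f l * g l) + p^2 * (\<Sum>l\<in>S. g l^2)"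
      by (simp add: sum.distrib sum_subtractf sum_distrib_left)
    also have "\<dots> = b * b * a - 2 * b * p * p + p * p * b"
      unfolding a_def[symmetric] b_def[symmetric] p_def[symmetric] by (simp add: power2_eq_square)
    finally have "0 \<le> b * (a * b - p ^ 2)" by (simp add: algebra_simps power2_eq_square)
    then have "p ^ 2 \<le> a * b" using bp by (simp add: zero_le_mult_iff)
    then show ?thesis unfolding a_def b_def p_def .
  qed
qed

lemma tri: "4 \<le> n \<Longrightarrow> i < n \<Longrightarrow> Suc (Suc (Suc i mod n) mod n) mod n \<noteq> i"
  by (auto simp: suc_mod)

lemma tri2: "3 \<le> n \<Longrightarrow> i < n \<Longrightarrow> Suc (Suc i mod n) mod n \<noteq> i"
  by (auto simp: suc_mod)

lemma nx_inj: "i < n \<Longrightarrow> j < n \<Longrightarrow> Suc i mod n = Suc j mod n \<longleftrightarrow> i = j"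
  by (auto simp: suc_mod split: if_splits)

lemma F1:
  assumes "4 \<le> n" "i < n" "m < n" "m \<noteq> i" "m \<noteq> Suc i mod n"
    "i = Suc m mod n \<or> m = Suc i mod n"
    "Suc i mod n = Suc m mod n \<or> m = Suc (Suc i mod n) mod n"
  shows False
proof -
  have "i = Suc m mod n" using assms(5,6) by auto
  moreover have "m = Suc (Suc i mod n) mod n" using assms(4,7) nx_inj[OF assms(2,3)] by auto
  ultimately show False using tri[OF assms(1,2)] by simp
qed



lemma uniq:
  fixes s t :: "nat \<Rightarrow> real" and A C :: "nat \<Rightarrow> nat \<Rightarrow> real"
  assumes n: "4 \<le> n" and pos: "\<forall>i<n. s i > 0 \<and> t i > 0"
    and pe: "(\<Prod>i<n. s i) = (\<Prod>i<n. t i)"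
    and hA: "is_gram n n A (cycB n s t)"
    and cp: "cp_factorization n k A C"
  shows "k = n \<and> (\<exists>\<sigma>. bij_betw \<sigma> {..<n} {..<n} \<and> (\<forall>i<n. \<forall>j<n. C i j = cycB n s t i (\<sigma> j)))"
proof -
  have n3: "3 \<le> n" using n by simp
  define nx where "nx i = Suc i mod n" for i
  have nxl: "nx i < n" for i unfolding nx_def using n by simp
  have Aval: "A i j = (if i = j then (s i)^2 + (t (pr n i))^2 else if j = nx i then s i * t i
      else if i = nx j then s j * t j else 0)" if "i < n" "j < n" for i j
    using hA gram_cyc[OF n3 that, of s t] that unfolding is_gram_def nx_def by simp
  have AD: "A (nx i) (nx i) = s (nx i) ^ 2 + t i ^ 2" if "i < n" for i
    using Aval[OF nxl nxl, of i i] pr_suc[OF that] unfolding nx_def by simp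
  have AE: "A i (nx i) = s i * t i" if "i < n" for i
  proof -
    have "i \<noteq> nx i" using that n unfolding nx_def by (auto simp: suc_mod)
    then show ?thesis using Aval[OF that nxl] by simp
  qed
  have AZ: "A i j = 0" if "i < n" "j < n" "i \<noteq> j" "j \<noteq> nx i" "i \<noteq> nx j" for i j
    using Aval[OF that(1,2)] that by simp
  have nonneg: "\<And>i l. i < n \<Longrightarrow> l < k \<Longrightarrow> C i l \<ge> 0"
    using cp unfolding cp_factorization_def nonneg_mat_def by blast
  have gram: "\<And>i j. i < n \<Longrightarrow> j < n \<Longrightarrow> A i j = (\<Sum>l<k. C i l * C j l)"
    using cp unfolding cp_factorization_def is_gram_def by blast
  have indep: "\<And>l l'. l < k \<Longrightarrow> l' < k \<Longrightarrow> l \<noteq> l' \<Longrightarrow> cols_lin_indep n C l l'"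
    using cp unfolding cp_factorization_def by blast
  have K1: "m' = nx m \<or> m = nx m'" if "l < k" "m < n" "m' < n" "C m l > 0" "C m' l > 0" "m \<noteq> m'" for l m m'
  proof (rule ccontr)
    assume na: "\<not> (m' = nx m \<or> m = nx m')"
    have "C m l * C m' l \<le> (\<Sum>l<k. C m l * C m' l)"
      by (rule member_le_sum) (use that nonneg in auto)
    then have "A m m' > 0" using gram[OF that(2,3)] that by (smt (verit) mult_pos_pos)
    moreover have "A m m' = 0" using AZ[OF that(2,3,6)] na by auto
    ultimately show False by simp
  qed
  define L where "L i = {l. l < k \<and> C i l > 0 \<and> C (nx i) l > 0}" for i
  have Lsub: "L i \<subseteq> {..<k}" for i unfolding L_def by auto
  have Lfin: "finite (L i)" for i using Lsub finite_subset by blast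
  have supp: "m = i \<or> m = nx i" if "i < n" "l \<in> L i" "m < n" "C m l > 0" for i l m
  proof (rule ccontr)
    assume h: "\<not> (m = i \<or> m = nx i)"
    have l: "l < k" "C i l > 0" "C (nx i) l > 0" using that(2) unfolding L_def by auto
    have a1: "i = nx m \<or> m = nx i" using K1[OF l(1) that(3) that(1) that(4) l(2)] h by auto
    have a2: "nx i = nx m \<or> m = nx (nx i)" using K1[OF l(1) that(3) nxl that(4) l(3)] h by auto
    show False using F1[OF n that(1) that(3)] h a1 a2 unfolding nx_def by blast
  qed
  have Ldisj: "L i \<inter> L j = {}" if "i < n" "j < n" "i \<noteq> j" for i j
  proof (rule ccontr)
    assume "L i \<inter> L j \<noteq> {}"
    then obtain l where l: "l \<in> L i" "l \<in> L j" by blast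
    have "C j l > 0" "C (nx j) l > 0" using l(2) unfolding L_def by auto
    then have "j = nx i" "nx j = i \<or> nx j = nx i" using supp[OF that(1) l(1) that(2)] supp[OF that(1) l(1) nxl] that(3) by auto
    then show False using tri2[OF n3 that(1)] nx_inj[OF that(1) that(2)] that(3) unfolding nx_def by auto
  qed
  define a where "a i = (\<Sum>l\<in>L i. C i l ^ 2)" for i
  define b where "b i = (\<Sum>l\<in>L i. C (nx i) l ^ 2)" for i
  have pval: "(\<Sum>l\<in>L i. C i l * C (nx i) l) = s i * t i" if i: "i < n" for i
  proof -
    have "(\<Sum>l\<in>L i. C i l * C (nx i) l) = (\<Sum>l<k. C i l * C (nx i) l)"
    proof (rule sum.mono_neutral_left)
      show "finite {..<k}" by simp
      show "L i \<subseteq> {..<k}" by (rule Lsub)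
      show "\<forall>l\<in>{..<k} - L i. C i l * C (nx i) l = 0"
      proof
        fix l assume "l \<in> {..<k} - L i"
        then have "l < k" "\<not> (C i l > 0 \<and> C (nx i) l > 0)" unfolding L_def by auto
        moreover have "C i l \<ge> 0" "C (nx i) l \<ge> 0" using nonneg i nxl \<open>l < k\<close> by auto
        ultimately show "C i l * C (nx i) l = 0" by auto
      qed
    qed
    then show ?thesis using gram[OF i nxl] AE[OF i] by simp
  qed
  have Lne: "L i \<noteq> {}" if "i < n" for i
  proof
    assume "L i = {}"
    then show False using pval[OF that] pos that by (simp add: ) (smt (verit) mult_pos_pos)
  qed
  have abpos: "a i > 0 \<and> b i > 0" if i: "i < n" for i
  proof -
    obtain l where l: "l \<in> L i" using Lne[OF i] by blast
    have lp: "C i l > 0" "C (nx i) l > 0" using l unfolding L_def by auto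
    have "C i l ^ 2 \<le> a i" unfolding a_def by (rule member_le_sum) (use l Lfin in auto)
    moreover have "C (nx i) l ^ 2 \<le> b i" unfolding b_def by (rule member_le_sum) (use l Lfin in auto)
    ultimately show ?thesis using lp by (smt (verit) zero_less_power)
  qed
  have cs: "(s i * t i) ^ 2 \<le> a i * b i" if "i < n" for i
    using cs_sum[OF Lfin, of "\<lambda>l. C i l" "\<lambda>l. C (nx i) l" i] pval[OF that] unfolding a_def b_def by simp
  have vtx: "A (nx i) (nx i) = a (nx i) + b i + (\<Sum>l\<in>{..<k} - (L (nx i) \<union> L i). C (nx i) l ^ 2)" if i: "i < n" for i
  proof -
    have "nx i \<noteq> i" using n i unfolding nx_def by (auto simp: suc_mod)
    then have d: "L (nx i) \<inter> L i = {}" using Ldisj[OF nxl i] by blast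
    have "A (nx i) (nx i) = (\<Sum>l<k. C (nx i) l ^ 2)" using gram[OF nxl nxl] by (simp add: power2_eq_square)
    also have "\<dots> = (\<Sum>l\<in>L (nx i) \<union> L i. C (nx i) l ^ 2) + (\<Sum>l\<in>{..<k} - (L (nx i) \<union> L i). C (nx i) l ^ 2)"
      using Lsub by (metis (no_types, lifting) finite_lessThan le_sup_iff sum.subset_diff add.commute)
    also have "(\<Sum>l\<in>L (nx i) \<union> L i. C (nx i) l ^ 2) = a (nx i) + b i"
      unfolding a_def b_def using d Lfin by (simp add: sum.union_disjoint)
    finally show ?thesis .
  qed
  have rest0: "(\<Sum>l\<in>{..<k} - (L (nx i) \<union> L i). C (nx i) l ^ 2) \<ge> 0" for i
    by (simp add: sum_nonneg)
  have vx: "\<forall>i<n. a (Suc i mod n) + b i \<le> (s (Suc i mod n))^2 + (t i)^2"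
    using vtx AD rest0 unfolding nx_def by (smt (verit))
  have ab: "\<forall>i<n. a i = (s i)^2 \<and> b i = (t i)^2"
    using cyc_ineq[of n s t a b] n pos abpos cs vx pe by auto
  have rest: "C (nx i) l = 0" if i: "i < n" and l: "l < k" "l \<notin> L (nx i) \<union> L i" for i l
  proof -
    have z: "(\<Sum>l\<in>{..<k} - (L (nx i) \<union> L i). C (nx i) l ^ 2) = 0"
      using vtx[OF i] AD[OF i] ab nxl[of i] i by simp
    have "\<forall>l\<in>{..<k} - (L (nx i) \<union> L i). C (nx i) l ^ 2 = 0"
      using sum_nonneg_eq_0_iff[of "{..<k} - (L (nx i) \<union> L i)" "\<lambda>l. C (nx i) l ^ 2"] z by simp
    then show ?thesis using l by simp
  qed
  have propL: "t i * C i l = s i * C (nx i) l" if i: "i < n" and l: "l \<in> L i" for i l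
  proof -
    have "(\<Sum>l\<in>L i. (t i * C i l - s i * C (nx i) l) ^ 2)
        = (\<Sum>l\<in>L i. t i^2 * C i l^2 - (2 * s i * t i) * (C i l * C (nx i) l) + s i^2 * C (nx i) l^2)"
      by (rule sum.cong) (simp_all add: power2_eq_square algebra_simps)
    also have "\<dots> = t i^2 * a i - (2 * s i * t i) * (\<Sum>l\<in>L i. C i l * C (nx i) l) + s i^2 * b i"
      unfolding a_def b_def by (simp add: sum.distrib sum_subtractf sum_distrib_left)
    also have "\<dots> = 0" using ab i pval[OF i] by (simp add: power2_eq_square)
    finally have "\<forall>l\<in>L i. (t i * C i l - s i * C (nx i) l) ^ 2 = 0"
      using sum_nonneg_eq_0_iff[of "L i" "\<lambda>l. (t i * C i l - s i * C (nx i) l) ^ 2"] Lfin[of i] by simp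
    then show ?thesis using l by simp
  qed
  have zero_out: "C m l = 0" if i: "i < n" and l: "l \<in> L i" and m: "m < n" "m \<noteq> i" "m \<noteq> nx i" for i l m
  proof -
    have "l < k" using l unfolding L_def by auto
    then have "C m l \<ge> 0" using nonneg m by auto
    moreover have "\<not> C m l > 0" using supp[OF i l m(1)] m by auto
    ultimately show ?thesis by simp
  qed
  have single: "l = l'" if i: "i < n" and l: "l \<in> L i" "l' \<in> L i" for i l l'
  proof (rule ccontr)
    assume ne: "l \<noteq> l'"
    have lk: "l < k" "l' < k" "C i l' > 0" using l unfolding L_def by auto
    have ind: "cols_lin_indep n C l l'" using indep[OF lk(1,2) ne] .
    have "\<forall>m<n. C i l' * C m l + (- C i l) * C m l' = 0"
    proof (intro allI impI)
      fix m assume m: "m < n"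
      show "C i l' * C m l + (- C i l) * C m l' = 0"
      proof (cases "m = i")
        case True then show ?thesis by simp
      next
        case F: False
        show ?thesis
        proof (cases "m = nx i")
          case True
          have "s i * (C i l' * C m l) = C i l' * (s i * C (nx i) l)" using True by (simp add: algebra_simps)
          also have "\<dots> = C i l' * (t i * C i l)" using propL[OF i l(1)] by simp
          also have "\<dots> = C i l * (t i * C i l')" by (simp add: algebra_simps)
          also have "\<dots> = C i l * (s i * C (nx i) l')" using propL[OF i l(2)] by simp
          also have "\<dots> = s i * (C i l * C m l')" using True by (simp add: algebra_simps)
          finally have "s i * (C i l' * C m l) = s i * (C i l * C m l')" .
          moreover have "s i \<noteq> 0" using pos i by force
          ultimately show ?thesis by simp
        next
          case False
          then show ?thesis using zero_out[OF i l(1) m F False] zero_out[OF i l(2) m F False] by simp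
        qed
      qed
    qed
    then have "C i l' = 0" using ind unfolding cols_lin_indep_def by blast
    then show False using lk by simp
  qed
  define \<phi> where "\<phi> i = (SOME l. l \<in> L i)" for i
  have Lphi: "L i = {\<phi> i}" if i: "i < n" for i
  proof -
    have "\<phi> i \<in> L i" unfolding \<phi>_def using Lne[OF i] by (simp add: some_in_eq)
    then show ?thesis using single[OF i] by blast
  qed
  have phik: "\<phi> i < k" if "i < n" for i using Lphi[OF that] unfolding L_def by auto
  have phival: "C m (\<phi> i) = (if m = i then s i else if m = nx i then t i else 0)" if i: "i < n" and m: "m < n" for i m
  proof -
    have l: "\<phi> i \<in> L i" using Lphi[OF i] by simp
    have p: "C i (\<phi> i) > 0" "C (nx i) (\<phi> i) > 0" using l unfolding L_def by auto
    have "a i = C i (\<phi> i) ^ 2" "b i = C (nx i) (\<phi> i) ^ 2" unfolding a_def b_def Lphi[OF i] by simp_all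
    then have "C i (\<phi> i) ^ 2 = s i ^ 2" "C (nx i) (\<phi> i) ^ 2 = t i ^ 2" using ab i by auto
    then have e: "C i (\<phi> i) = s i" "C (nx i) (\<phi> i) = t i"
      using p pos i by (auto intro: power2_eq_imp_eq less_imp_le)
    have "i \<noteq> nx i" using i n unfolding nx_def by (auto simp: suc_mod)
    show ?thesis
    proof (cases "m = i")
      case True then show ?thesis using e by simp
    next
      case F: False
      show ?thesis
      proof (cases "m = nx i")
        case True then show ?thesis using e F by simp
      next
        case False then show ?thesis using zero_out[OF i l m F False] F by simp
      qed
    qed
  qed
  have phi_inj: "inj_on \<phi> {..<n}"
  proof (rule inj_onI)
    fix i j assume "i \<in> {..<n}" "j \<in> {..<n}" "\<phi> i = \<phi> j"
    then show "i = j"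
    proof -
      assume h: "i \<in> {..<n}" "j \<in> {..<n}" "\<phi> i = \<phi> j"
      show "i = j"
      proof (rule ccontr)
        assume ij: "i \<noteq> j"
        have "\<phi> i \<in> L i" "\<phi> i \<in> L j" using Lphi[of i] Lphi[of j] h by auto
        then show False using Ldisj[of i j] h ij by auto
      qed
    qed
  qed
  have kn: "n \<le> k"
  proof -
    have sub: "\<phi> ` {..<n} \<subseteq> {..<k}" using phik by auto
    show ?thesis using card_inj_on_le[OF phi_inj sub] by simp
  qed
  have colnz: "\<exists>m<n. C m l > 0" if l: "l < k" for l
  proof (rule ccontr)
    assume "\<not> (\<exists>m<n. C m l > 0)"
    then have z0: "\<forall>m<n. C m l \<le> 0" using leD by force
    have z: "\<forall>m<n. C m l = 0"
    proof (intro allI impI)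
      fix m assume "m < n"
      then show "C m l = 0" using z0 nonneg[of m l] l by (simp add: order.antisym)
    qed
    define l' where "l' = (if l = 0 then 1 else (0::nat))"
    have l': "l' < k" "l \<noteq> l'" using n kn l unfolding l'_def by auto
    have "cols_lin_indep n C l l'" using indep[OF l l'(1,2)] .
    then have "(\<forall>m<n. 1 * C m l + 0 * C m l' = 0) \<longrightarrow> (1::real) = 0 \<and> (0::real) = 0"
      unfolding cols_lin_indep_def by blast
    moreover have "\<forall>m<n. 1 * C m l + 0 * C m l' = 0"
    proof (intro allI impI)
      fix m :: nat assume "m < n"
      then have "C m l = 0" using z by blast
      then show "1 * C m l + 0 * C m l' = 0" by simp
    qed
    ultimately have "(1::real) = 0" by blast
    then show False by simp
  qed
  have cover: "l \<in> \<phi> ` {..<n}" if l: "l < k" for l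
  proof -
    obtain m where m: "m < n" "C m l > 0" using colnz[OF l] by blast
    define i where "i = pr n m"
    have i: "i < n" "nx i = m" unfolding i_def nx_def using pr_lt[OF m(1)] suc_pr[OF m(1)] by auto
    have "l \<in> L (nx i) \<union> L i"
    proof (rule ccontr)
      assume "l \<notin> L (nx i) \<union> L i"
      then have "C (nx i) l = 0" using rest[OF i(1) l(1)] by blast
      then show False using m i by simp
    qed
    then have "l = \<phi> m \<or> l = \<phi> i" using Lphi[OF m(1)] Lphi[OF i(1)] i by auto
    then show ?thesis using m i by auto
  qed
  have bij: "bij_betw \<phi> {..<n} {..<k}"
    unfolding bij_betw_def using phi_inj phik cover by auto
  have kn2: "k = n" using bij_betw_same_card[OF bij] by simp
  define \<sigma> where "\<sigma> = inv_into {..<n} \<phi>"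
  have sb: "bij_betw \<sigma> {..<n} {..<n}" unfolding \<sigma>_def using bij_betw_inv_into[OF bij] kn2 by simp
  have "C i j = cycB n s t i (\<sigma> j)" if i: "i < n" and j: "j < n" for i j
  proof -
    have jim: "j \<in> \<phi> ` {..<n}" using cover j kn2 by simp
    have e: "\<phi> (\<sigma> j) = j" unfolding \<sigma>_def using f_inv_into_f[OF jim] .
    have sj: "\<sigma> j < n" unfolding \<sigma>_def using inv_into_into[OF jim] by simp
    have "C i j = C i (\<phi> (\<sigma> j))" using e by simp
    also have "\<dots> = cycB n s t i (\<sigma> j)" using phival[OF sj i] unfolding cycB_def nx_def by simp
    finally show ?thesis .
  qed
  then show ?thesis using kn2 sb by blast
qed


theorem corollary4p4:
  fixes n :: nat and A :: "nat \<Rightarrow> nat \<Rightarrow> real" and s t :: "nat \<Rightarrow> real"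
  assumes "n \<ge> 4"
    and "completely_positive n A"
    and "graph_edges n A = cycle_edges n"
    and "\<forall>i<n. s i > 0 \<and> t i > 0"
    and "is_gram n n A (cycB n s t)"
  shows "unique_cp_factorization n n A (cycB n s t) \<longleftrightarrow> (\<Prod>i<n. s i) = (\<Prod>i<n. t i)"
proof
  assume U: "unique_cp_factorization n n A (cycB n s t)"
  show "(\<Prod>i<n. s i) = (\<Prod>i<n. t i)"
  proof (rule ccontr)
    assume ne: "(\<Prod>i<n. s i) \<noteq> (\<Prod>i<n. t i)"
    have n2: "2 \<le> n" "3 \<le> n" using assms(1) by auto
    have "\<exists>X. good_X n s t X"
    proof (cases "(\<Prod>i<n. s i) < (\<Prod>i<n. t i)")
      case True then show ?thesis using case_lt[OF n2(1) assms(4)] by blast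
    next
      case False
      then have "(\<Prod>i<n. t i) < (\<Prod>i<n. s i)" using ne by simp
      then show ?thesis using case_gt[OF n2(1) assms(4)] by blast
    qed
    then obtain X where X: "good_X n s t X" by blast
    have pos: "\<forall>i<n. s i > 0 \<and> t i > 0 \<and> X i > 0" using X assms(4) unfolding good_X_def by auto
    obtain C where "cp_factorization n (Suc n) A C"
      using nonuniq_X[OF n2(2) pos assms(5)] X unfolding good_X_def by blast
    then have "Suc n = n" using U unfolding unique_cp_factorization_def by blast
    then show False by simp
  qed
next
  assume pe: "(\<Prod>i<n. s i) = (\<Prod>i<n. t i)"
  have n3: "3 \<le> n" using assms(1) by simp
  have nn: "nonneg_mat n n (cycB n s t)"
    unfolding nonneg_mat_def
  proof (intro allI impI)
    fix i j assume "i < n" "j < n"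
    then show "0 \<le> cycB n s t i j" using assms(4) unfolding cycB_def by (simp add: less_imp_le)
  qed
  have ind: "\<forall>l<n. \<forall>l'<n. l \<noteq> l' \<longrightarrow> cols_lin_indep n (cycB n s t) l l'"
    using cycB_indep[OF n3 assms(4)] by blast
  have cp: "cp_factorization n n A (cycB n s t)"
    unfolding cp_factorization_def using nn assms(5) ind by blast
  show "unique_cp_factorization n n A (cycB n s t)"
    unfolding unique_cp_factorization_def
    using cp uniq[OF assms(1) assms(4) pe assms(5)] by blast
qed

end
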